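(* Let $G$ be a Hausdorff topological group and $\beta\colon G\times Y\to Y$ a continuous global action on a topological space $Y$, and let $U$ be an open subset of $Y$. Let $\theta$ be the restriction of $\beta$ to $U$, i.e. the partial action with $U_g=U\cap\beta_g(U)$ and $\theta_g=\beta_g|_{U_{g^{-1}}}$. Then the enveloping space $U_G$ of $\theta$ is homeomorphic to an open subset of $Y$.
   Context: For a topological partial action $\theta=\{\theta_g\colon U_{g^{-1}}\to U_g\}$ on $U$, the enveloping space is $U_G=(G\times U)/R$ with the quotient topology, where $(g,x)R(h,y)$ iff $x\in U_{g^{-1}h}$ and $\theta_{h^{-1}g}(x)=y$. *)

theory Defs
  imports "HOL-Analysis.Analysis"
begin

definition quotient_topology :: "'a topology \<Rightarrow> ('a \<times> 'a) set \<Rightarrow> 'a set topology" where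
  "quotient_topology T R =
     topology (\<lambda>S. S \<subseteq> (\<lambda>p. R `` {p}) ` topspace T \<and>
                   openin T {p \<in> topspace T. R `` {p} \<in> S})"

text \<open>Relation R of the enveloping space of a partial action (D, \<theta>), with
  D g = U_g and \<theta> g : U_{g^{-1}} \<rightarrow> U_g. The group is written additively:
  (g,x) R (h,y) iff x \<in> U_{g^{-1}h} and \<theta>_{h^{-1}g}(x) = y.\<close>
definition env_rel :: "('g::group_add \<Rightarrow> 'a set) \<Rightarrow> ('g \<Rightarrow> 'a \<Rightarrow> 'a) \<Rightarrow> (('g \<times> 'a) \<times> ('g \<times> 'a)) set" where
  "env_rel D \<theta> = {((g, x), (h, y)). x \<in> D (- g + h) \<and> \<theta> (- h + g) x = y}"

definition enveloping_space ::
  "'a topology \<Rightarrow> ('g::{topological_space, group_add} \<Rightarrow> 'a set) \<Rightarrow> ('g \<Rightarrow> 'a \<Rightarrow> 'a) \<Rightarrow> ('g \<times> 'a) set topology" where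
  "enveloping_space X D \<theta> = quotient_topology (prod_topology euclidean X) (env_rel D \<theta>)"

end

theory Submission
  imports Defs
begin

lemma qt_open:
  "openin (quotient_topology T R) S \<longleftrightarrow>
     S \<subseteq> (\<lambda>p. R `` {p}) ` topspace T \<and> openin T {p \<in> topspace T. R `` {p} \<in> S}"
proof -
  let ?L = "\<lambda>S. S \<subseteq> (\<lambda>p. R `` {p}) ` topspace T \<and> openin T {p \<in> topspace T. R `` {p} \<in> S}"
  have "istopology ?L"
    unfolding istopology_def
  proof (rule conjI)
    show "\<forall>S S'. ?L S \<longrightarrow> ?L S' \<longrightarrow> ?L (S \<inter> S')"
    proof (intro allI impI)
    fix S S' assume a1: "?L S" and a2: "?L S'"
    have eq: "{p \<in> topspace T. R `` {p} \<in> S \<inter> S'} =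
       {p \<in> topspace T. R `` {p} \<in> S} \<inter> {p \<in> topspace T. R `` {p} \<in> S'}" by auto
    have "openin T ({p \<in> topspace T. R `` {p} \<in> S} \<inter> {p \<in> topspace T. R `` {p} \<in> S'})"
      using a1 a2 by (intro openin_Int) auto
    moreover have "S \<inter> S' \<subseteq> (\<lambda>p. R `` {p}) ` topspace T" using a1 by blast
    ultimately show "?L (S \<inter> S')" unfolding eq by blast
    qed
  next
    show "\<forall>K. (\<forall>S\<in>K. ?L S) \<longrightarrow> ?L (\<Union>K)"
    proof (intro allI impI)
    fix K assume K: "\<forall>S\<in>K. ?L S"
    have "{p \<in> topspace T. R `` {p} \<in> \<Union>K} = \<Union>((\<lambda>S. {p \<in> topspace T. R `` {p} \<in> S}) ` K)" by auto
    moreover have "openin T (\<Union>((\<lambda>S. {p \<in> topspace T. R `` {p} \<in> S}) ` K))"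
      using K by (intro openin_Union) auto
    ultimately show "?L (\<Union>K)" using K by auto
    qed
  qed
  then show ?thesis unfolding quotient_topology_def by simp
qed

lemma qt_topspace:
  "topspace (quotient_topology T R) = (\<lambda>p. R `` {p}) ` topspace T"
proof -
  have e: "{p \<in> topspace T. R `` {p} \<in> (\<lambda>p. R `` {p}) ` topspace T} = topspace T" by auto
  have "openin (quotient_topology T R) ((\<lambda>p. R `` {p}) ` topspace T)"
    unfolding qt_open e by auto
  then have "(\<lambda>p. R `` {p}) ` topspace T \<subseteq> topspace (quotient_topology T R)"
    by (rule openin_subset)
  moreover have "topspace (quotient_topology T R) \<subseteq> (\<lambda>p. R `` {p}) ` topspace T"
    using qt_open[of T R "topspace (quotient_topology T R)"] by auto
  ultimately show ?thesis by blast
qed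

theorem lemma3p8:
  fixes Y :: "'y topology"
    and \<beta> :: "'g::{topological_group_add, t2_space} \<Rightarrow> 'y \<Rightarrow> 'y"
    and U :: "'y set"
  assumes cont: "continuous_map (prod_topology euclidean Y) Y (\<lambda>(g, y). \<beta> g y)"
    and act_id: "\<forall>y\<in>topspace Y. \<beta> 0 y = y"
    and act_comp: "\<forall>g h. \<forall>y\<in>topspace Y. \<beta> (g + h) y = \<beta> g (\<beta> h y)"
    and U_open: "openin Y U"
  shows "\<exists>V. openin Y V \<and>
           enveloping_space (subtopology Y U) (\<lambda>g. U \<inter> \<beta> g ` U) \<beta>
             homeomorphic_space subtopology Y V"
proof -
  define T where "T = prod_topology (euclidean::'g topology) (subtopology Y U)"
  define R where "R = env_rel (\<lambda>g. U \<inter> \<beta> g ` U) \<beta>"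
  define q where "q = (\<lambda>p. R `` {p})"
  define \<phi> where "\<phi> = (\<lambda>(g, y). \<beta> g y)"
  define V where "V = \<phi> ` topspace T"
  have UY: "U \<subseteq> topspace Y" using U_open openin_subset by blast
  have tT: "topspace T = UNIV \<times> U" unfolding T_def using UY by auto
  have comp: "\<beta> g (\<beta> h y) = \<beta> (g + h) y" if "y \<in> topspace Y" for g h y
    using act_comp that by auto
  have R_char: "(p, p') \<in> R \<longleftrightarrow> p' \<in> topspace T \<and> \<phi> p = \<phi> p'" if p: "p \<in> topspace T" for p p'
  proof -
    obtain g x where px: "p = (g, x)" by fastforce
    obtain h y where py: "p' = (h, y)" by fastforce
    have x: "x \<in> U" "x \<in> topspace Y" using p px tT UY by auto
    show ?thesis
    proof
      assume "(p, p') \<in> R"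
      then have 1: "x \<in> \<beta> (-g + h) ` U" and 2: "\<beta> (-h + g) x = y"
        unfolding R_def env_rel_def px py by auto
      then obtain u where u: "u \<in> U" "x = \<beta> (-g + h) u" by auto
      have uY: "u \<in> topspace Y" using u UY by auto
      have "y = \<beta> ((-h + g) + (-g + h)) u" using 2 u comp[OF uY] by simp
      also have "\<dots> = u" using act_id uY by (simp add: add.assoc)
      finally have "y \<in> U" using u by simp
      moreover have "\<beta> h y = \<beta> g x" using comp[OF x(2)] unfolding 2[symmetric] by simp
      ultimately show "p' \<in> topspace T \<and> \<phi> p = \<phi> p'" using tT px py \<phi>_def by auto
    next
      assume a: "p' \<in> topspace T \<and> \<phi> p = \<phi> p'"
      then have y: "y \<in> U" "y \<in> topspace Y" and e: "\<beta> g x = \<beta> h y"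
        using tT py px UY \<phi>_def by auto
      have "\<beta> (-g + h) y = \<beta> (-g) (\<beta> h y)" using comp[OF y(2)] by simp
      also have "\<dots> = \<beta> (-g + g) x" unfolding e[symmetric] using comp[OF x(2)] by simp
      also have "\<dots> = x" using act_id x by simp
      finally have 1: "x \<in> \<beta> (-g + h) ` U" using y by force
      have "\<beta> (-h + g) x = \<beta> (-h) (\<beta> g x)" using comp[OF x(2)] by simp
      also have "\<dots> = \<beta> (-h + h) y" unfolding e using comp[OF y(2)] by simp
      also have "\<dots> = y" using act_id y by simp
      finally show "(p, p') \<in> R"
        unfolding R_def env_rel_def px py using 1 x by auto
    qed
  qed
  have q_char: "q p = {p'' \<in> topspace T. \<phi> p'' = \<phi> p}" if "p \<in> topspace T" for p
    using R_char[OF that] unfolding q_def by auto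
  have q_eq: "q p = q p' \<longleftrightarrow> \<phi> p = \<phi> p'" if "p \<in> topspace T" "p' \<in> topspace T" for p p'
  proof
    assume "q p = q p'"
    moreover have "p \<in> q p" using q_char[OF that(1)] that(1) by simp
    ultimately show "\<phi> p = \<phi> p'" using q_char[OF that(2)] by simp
  next
    assume "\<phi> p = \<phi> p'"
    then show "q p = q p'" using q_char[OF that(1)] q_char[OF that(2)] by simp
  qed
  have bY: "\<beta> g y \<in> topspace Y" if "y \<in> topspace Y" for g y
  proof -
    have "(g, y) \<in> topspace (prod_topology euclidean Y)" using that by simp
    then have "(\<lambda>(g, y). \<beta> g y) (g, y) \<in> topspace Y"
      using continuous_map_image_subset_topspace[OF cont] by blast
    then show ?thesis by simp
  qed
  have bcont: "continuous_map Y Y (\<beta> g)" for g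
  proof -
    have "continuous_map Y (prod_topology euclidean Y) (\<lambda>y. (g, y))"
      by (simp add: continuous_map_pairwise o_def)
    from continuous_map_compose[OF this cont] show ?thesis by (simp add: o_def)
  qed
  have bopen: "openin Y (\<beta> g ` B)" if B: "openin Y B" for g B
  proof -
    have BY: "B \<subseteq> topspace Y" using B openin_subset by blast
    have "\<beta> g ` B = {y \<in> topspace Y. \<beta> (-g) y \<in> B}"
    proof
      show "\<beta> g ` B \<subseteq> {y \<in> topspace Y. \<beta> (-g) y \<in> B}"
      proof
        fix y assume "y \<in> \<beta> g ` B"
        then obtain b where b: "b \<in> B" "y = \<beta> g b" by auto
        have bb: "b \<in> topspace Y" using b BY by auto
        have "\<beta> (-g) y = b" using b comp[OF bb] act_id bb by simp
        then show "y \<in> {y \<in> topspace Y. \<beta> (-g) y \<in> B}" using b bY[OF bb] by auto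
      qed
    next
      show "{y \<in> topspace Y. \<beta> (-g) y \<in> B} \<subseteq> \<beta> g ` B"
      proof
        fix y assume y: "y \<in> {y \<in> topspace Y. \<beta> (-g) y \<in> B}"
        then have "y = \<beta> g (\<beta> (-g) y)" using comp act_id by simp
        then show "y \<in> \<beta> g ` B" using y by blast
      qed
    qed
    moreover have "openin Y {y \<in> topspace Y. \<beta> (-g) y \<in> B}"
      using bcont B by (simp add: continuous_map_def)
    ultimately show ?thesis by simp
  qed
  have phi_open: "openin Y (\<phi> ` W)" if W: "openin T W" for W
  proof (subst openin_subopen, intro ballI)
    fix z assume "z \<in> \<phi> ` W"
    then obtain g x where gx: "(g, x) \<in> W" "z = \<beta> g x" unfolding \<phi>_def by auto
    then obtain A B where AB: "openin euclidean A" "openin (subtopology Y U) B" "g \<in> A" "x \<in> B" "A \<times> B \<subseteq> W"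
      using W unfolding T_def openin_prod_topology_alt by meson
    have BY: "openin Y B" using AB(2) U_open openin_trans_full by blast
    have "\<beta> g ` B \<subseteq> \<phi> ` W"
    proof
      fix y assume "y \<in> \<beta> g ` B"
      then obtain b where "b \<in> B" "y = \<beta> g b" by auto
      then show "y \<in> \<phi> ` W" using AB unfolding \<phi>_def by (auto intro!: image_eqI[where x="(g,b)"])
    qed
    then show "\<exists>T. openin Y T \<and> z \<in> T \<and> T \<subseteq> \<phi> ` W"
      using bopen[OF BY] gx AB by blast
  qed
  have VY: "openin Y V" unfolding V_def by (rule phi_open) simp
  then have VsY: "V \<subseteq> topspace Y" by (rule openin_subset)
  have phic: "continuous_map T (subtopology Y V) \<phi>"
  proof -
    have "continuous_map T Y \<phi>"
      unfolding T_def \<phi>_def prod_topology_subtopology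
      by (rule continuous_map_from_subtopology[OF cont])
    then show ?thesis by (simp add: continuous_map_into_subtopology V_def)
  qed
  define F where "F = (\<lambda>C. \<phi> (SOME p. p \<in> topspace T \<and> C = q p))"
  have Fq: "F (q p) = \<phi> p" if p: "p \<in> topspace T" for p
  proof -
    have "\<exists>p'. p' \<in> topspace T \<and> q p = q p'" using p by blast
    then have "(SOME p'. p' \<in> topspace T \<and> q p = q p') \<in> topspace T \<and>
               q p = q (SOME p'. p' \<in> topspace T \<and> q p = q p')"
      by (rule someI_ex)
    then show ?thesis unfolding F_def using q_eq p by metis
  qed
  define Q where "Q = enveloping_space (subtopology Y U) (\<lambda>g. U \<inter> \<beta> g ` U) \<beta>"
  have Qdef: "Q = quotient_topology T R" unfolding Q_def enveloping_space_def T_def R_def ..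
  have tQ: "topspace Q = q ` topspace T" unfolding Qdef qt_topspace q_def ..
  have oQ: "openin Q S \<longleftrightarrow> S \<subseteq> q ` topspace T \<and> openin T {p \<in> topspace T. q p \<in> S}" for S
    unfolding Qdef qt_open q_def ..
  have Qpt: "\<exists>p. p \<in> topspace T \<and> C = q p" if "C \<in> topspace Q" for C
    using that tQ by blast
  have qQ: "q p \<in> topspace Q" if "p \<in> topspace T" for p
    using that tQ by blast
  have "homeomorphic_map Q (subtopology Y V) F"
  proof (rule bijective_open_imp_homeomorphic_map)
    show "continuous_map Q (subtopology Y V) F"
      unfolding continuous_map_def
    proof (intro conjI allI impI)
      show "F \<in> topspace Q \<rightarrow> topspace (subtopology Y V)"
      proof
        fix C assume "C \<in> topspace Q"
        then obtain p where p: "p \<in> topspace T" "C = q p" using Qpt by blast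
        then have "F C = \<phi> p" using Fq by simp
        then show "F C \<in> topspace (subtopology Y V)" using p VsY unfolding V_def by auto
      qed
    next
      fix Op assume Op: "openin (subtopology Y V) Op"
      have eq: "{p \<in> topspace T. q p \<in> {x \<in> topspace Q. F x \<in> Op}} = {p \<in> topspace T. \<phi> p \<in> Op}"
      proof (rule Collect_cong)
        fix p show "(p \<in> topspace T \<and> q p \<in> {x \<in> topspace Q. F x \<in> Op}) = (p \<in> topspace T \<and> \<phi> p \<in> Op)"
          using Fq[of p] qQ[of p] by auto
      qed
      have "openin T {p \<in> topspace T. \<phi> p \<in> Op}"
        using phic Op unfolding continuous_map_def by blast
      moreover have "{x \<in> topspace Q. F x \<in> Op} \<subseteq> q ` topspace T" using tQ by blast
      ultimately show "openin Q {x \<in> topspace Q. F x \<in> Op}"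
        unfolding oQ eq by blast
    qed
  next
    show "open_map Q (subtopology Y V) F"
      unfolding open_map_def
    proof (intro allI impI)
      fix S assume S: "openin Q S"
      define W where "W = {p \<in> topspace T. q p \<in> S}"
      have W: "openin T W" using S unfolding oQ W_def by blast
      have Ssub: "S \<subseteq> q ` topspace T" using S unfolding oQ by blast
      have "F ` S = \<phi> ` W"
      proof
        show "F ` S \<subseteq> \<phi> ` W"
        proof
          fix z assume "z \<in> F ` S"
          then obtain C where C: "C \<in> S" "z = F C" by blast
          then obtain p where p: "p \<in> topspace T" "C = q p" using Ssub by blast
          then have "p \<in> W" "z = \<phi> p" using C Fq unfolding W_def by auto
          then show "z \<in> \<phi> ` W" by blast
        qed
        show "\<phi> ` W \<subseteq> F ` S"
        proof
          fix z assume "z \<in> \<phi> ` W"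
          then obtain p where p: "p \<in> W" "z = \<phi> p" by blast
          then have "p \<in> topspace T" "q p \<in> S" unfolding W_def by auto
          then have "z = F (q p)" "q p \<in> S" using Fq p by auto
          then show "z \<in> F ` S" by blast
        qed
      qed
      moreover have "\<phi> ` W \<subseteq> V" using W_def V_def by auto
      ultimately show "openin (subtopology Y V) (F ` S)"
        unfolding openin_subtopology using phi_open[OF W] by blast
    qed
  next
    show "F ` topspace Q = topspace (subtopology Y V)"
    proof
      show "F ` topspace Q \<subseteq> topspace (subtopology Y V)"
      proof
        fix z assume "z \<in> F ` topspace Q"
        then obtain C where "C \<in> topspace Q" "z = F C" by blast
        then obtain p where p: "p \<in> topspace T" "z = F (q p)" using Qpt by blast
        then show "z \<in> topspace (subtopology Y V)" using Fq VsY unfolding V_def by auto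
      qed
      show "topspace (subtopology Y V) \<subseteq> F ` topspace Q"
      proof
        fix z assume "z \<in> topspace (subtopology Y V)"
        then obtain p where p: "p \<in> topspace T" "z = \<phi> p" unfolding V_def by auto
        then have "z = F (q p)" "q p \<in> topspace Q" using Fq qQ by auto
        then show "z \<in> F ` topspace Q" by blast
      qed
    qed
  next
    show "inj_on F (topspace Q)"
    proof (rule inj_onI)
      fix C C' assume C: "C \<in> topspace Q" and C': "C' \<in> topspace Q" and e: "F C = F C'"
      obtain p where p: "p \<in> topspace T" "C = q p" using Qpt C by blast
      obtain p' where p': "p' \<in> topspace T" "C' = q p'" using Qpt C' by blast
      have "\<phi> p = \<phi> p'" using e p p' Fq by simp
      then show "C = C'" using q_eq p p' by simp
    qed
  qed
  then show ?thesis using VY Q_def homeomorphic_map_imp_homeomorphic_space by blast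
qed

end
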